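(* Let $n$ be a positive integer and let $w_1 \le \dots \le w_m$ be a feasible partition of $n$, with partial sums $R_i = w_1+\dots+w_i$ and $R_0=0$. Then for every $i$ with $1 \le i \le m$, $w_i \le 2R_{i-1}+1$.
   Context: For a positive integer $n$, a weighing partition of $n$ is a multiset of positive integers $\{w_1,\dots,w_k\}$ summing to $n$ such that every integer $\ell$ with $1\le\ell\le n$ equals $\sum_j u_j w_j$ for some $u_j\in\{-1,0,1\}$. Let $m$ be the minimum number of parts of a weighing partition of $n$. A feasible partition of $n$ is a weighing partition with exactly $m$ parts, written $w_1\le\dots\le w_m$. $R_i=w_1+\dots+w_i$, $R_0=0$, so $R_m=n$. *)

theory Defs
  imports Main "HOL-Library.Multiset"
begin

definition weighing_partition :: "nat \<Rightarrow> nat multiset \<Rightarrow> bool" where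
  "weighing_partition n W \<longleftrightarrow>
     (\<forall>w \<in># W. w > 0) \<and> sum_mset W = n \<and>
     (\<forall>l::nat. 1 \<le> l \<and> l \<le> n \<longrightarrow>
        (\<exists>ws u. mset ws = W \<and> (\<forall>j < length ws. u j \<in> {-1, 0, 1::int}) \<and>
                 int l = (\<Sum>j < length ws. u j * int (ws ! j))))"

definition min_parts :: "nat \<Rightarrow> nat" where
  "min_parts n = (LEAST k. \<exists>W. weighing_partition n W \<and> size W = k)"

definition feasible_partition :: "nat \<Rightarrow> nat multiset \<Rightarrow> bool" where
  "feasible_partition n W \<longleftrightarrow> weighing_partition n W \<and> size W = min_parts n"

end

theory Submission
  imports Defs
begin

lemma filt_le: "sum_list (filter P (xs::nat list)) \<le> sum_list xs"
  by (induction xs) auto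

lemma keylem:
  fixes vs :: "nat list" and c :: "nat \<Rightarrow> int"
  assumes "\<forall>j<length vs. 0 \<le> c j \<and> c j \<le> 2"
    and "(\<Sum>j<length vs. c j * int (vs!j)) \<le> int k"
  shows "(\<Sum>j<length vs. c j * int (vs!j)) \<le> 2 * int (sum_list (filter (\<lambda>x. x \<le> k) vs))"
  using assms
proof (induction vs arbitrary: c)
  case Nil
  then show ?case by simp
next
  case (Cons x vs)
  let ?c = "\<lambda>j. c (Suc j)"
  have eq: "(\<Sum>j<length (x#vs). c j * int ((x#vs)!j)) = c 0 * int x + (\<Sum>j<length vs. ?c j * int (vs!j))"
    by (simp only: length_Cons sum.lessThan_Suc_shift) simp
  have nn: "0 \<le> (\<Sum>j<length vs. ?c j * int (vs!j))"
    using Cons.prems(1) by (intro sum_nonneg) auto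
  have c0: "0 \<le> c 0" "c 0 \<le> 2" using Cons.prems(1) by auto
  have h0: "0 \<le> c 0 * int x" using c0 by simp
  have IH: "(\<Sum>j<length vs. ?c j * int (vs!j)) \<le> 2 * int (sum_list (filter (\<lambda>x. x \<le> k) vs))"
    apply (rule Cons.IH)
    using Cons.prems(1) apply auto[1]
    using Cons.prems(2) h0 unfolding eq by linarith
  show ?case
  proof (cases "x \<le> k")
    case True
    have "c 0 * int x \<le> 2 * int x" using c0 by (intro mult_right_mono) auto
    then show ?thesis using True eq IH by simp
  next
    case False
    have "c 0 = 0"
    proof (rule ccontr)
      assume "c 0 \<noteq> 0"
      then have "c 0 \<ge> 1" using c0 by simp
      then have m: "c 0 * int x \<ge> int x" by (simp add: mult_le_cancel_right1)
      show False using m False Cons.prems(2) nn unfolding eq by linarith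
    qed
    then show ?thesis using False eq IH by simp
  qed
qed

theorem theorem2:
  fixes n :: nat and ws :: "nat list"
  assumes "n > 0"
    and "sorted ws"
    and "feasible_partition n (mset ws)"
  shows "\<forall>i. 1 \<le> i \<and> i \<le> length ws \<longrightarrow>
           ws ! (i - 1) \<le> 2 * (\<Sum>j < i - 1. ws ! j) + 1"
proof (intro allI impI, rule ccontr)
  fix i assume i: "1 \<le> i \<and> i \<le> length ws"
    and nle: "\<not> ws ! (i - 1) \<le> 2 * (\<Sum>j < i - 1. ws ! j) + 1"
  define R where "R = (\<Sum>j < i - 1. ws ! j)"
  define k where "k = 2 * R + 1"
  have wk: "ws ! (i-1) > k" using nle unfolding k_def R_def by simp
  have wp: "weighing_partition n (mset ws)" using assms(3) unfolding feasible_partition_def by simp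
  have sumn: "sum_list ws = n" using wp unfolding weighing_partition_def
    by (simp add: sum_mset_sum_list)
  have "ws ! (i-1) \<in> set ws" using i by (intro nth_mem) linarith
  hence "ws ! (i-1) \<le> n" using sumn member_le_sum_list[of "ws ! (i-1)" ws] by simp
  hence kn: "k < n" using wk by simp
  obtain ws' u where ws': "mset ws' = mset ws" and u: "\<forall>j < length ws'. u j \<in> {-1, 0, 1::int}"
    and l: "int (n - k) = (\<Sum>j < length ws'. u j * int (ws' ! j))"
  proof -
    have "1 \<le> n - k \<and> n - k \<le> n" using kn by simp
    then show ?thesis using wp that unfolding weighing_partition_def by blast
  qed
  have sl: "sum_list ws' = n" using ws' sumn by (metis sum_mset_sum_list)
  have "int n = (\<Sum>j < length ws'. int (ws' ! j))"
    using sl by (simp add: sum_list_sum_nth atLeast0LessThan flip: of_nat_sum)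
  hence ck: "(\<Sum>j<length ws'. (1 - u j) * int (ws'!j)) = int k"
    using l kn by (simp add: algebra_simps sum_subtractf)
  have "int k \<le> 2 * int (sum_list (filter (\<lambda>x. x \<le> k) ws'))"
    using keylem[of ws' "\<lambda>j. 1 - u j" k] u ck by force
  moreover have "sum_list (filter (\<lambda>x. x \<le> k) ws') = sum_list (filter (\<lambda>x. x \<le> k) ws)"
    by (metis mset_filter ws' sum_mset_sum_list)
  moreover have "sum_list (filter (\<lambda>x. x \<le> k) ws) \<le> R"
  proof -
    have dec: "ws = take (i-1) ws @ drop (i-1) ws" by simp
    have "filter (\<lambda>x. x \<le> k) (drop (i-1) ws) = []"
    proof -
      have "\<forall>x\<in>set (drop (i-1) ws). \<not> x \<le> k"
      proof
        fix x assume "x \<in> set (drop (i-1) ws)"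
        then obtain p where p: "p < length ws - (i-1)" "x = ws ! (i-1+p)"
          by (auto simp: in_set_conv_nth)
        have "ws ! (i-1) \<le> ws ! (i-1+p)"
          using assms(2) p i by (intro sorted_nth_mono) auto
        then show "\<not> x \<le> k" using p wk by simp
      qed
      then show ?thesis by (simp add: filter_empty_conv)
    qed
    hence "sum_list (filter (\<lambda>x. x \<le> k) ws) = sum_list (filter (\<lambda>x. x \<le> k) (take (i-1) ws))"
      by (metis dec filter_append append_Nil2)
    also have "\<dots> \<le> sum_list (take (i-1) ws)"
      by (rule filt_le)
    also have "\<dots> = R"
    proof -
      have "i - 1 < length ws" using i by linarith
      then show ?thesis unfolding R_def by (simp add: sum_list_sum_nth atLeast0LessThan min_def)
    qed
    finally show ?thesis .
  qed
  ultimately show False unfolding k_def by simp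
qed

end
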